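(* Let $p_{Z|XY}$ be a randomized function (not necessarily in normal form) and let $p_X,p_Y$ be distributions on $\mathcal X,\mathcal Y$. Any secure protocol $\Pi(p_Xp_Y,p_{Z|XY})$, i.e. with independent inputs $X\sim p_X$, $Y\sim p_Y$, satisfies $I(X;M_{23})=I(Y;M_{31})=0$.
   Context: Setting: $\mathcal X,\mathcal Y,\mathcal Z$ finite sets; Alice (party 1) holds $X\in\mathcal X$, Bob (party 2) holds $Y\in\mathcal Y$, $(X,Y)\sim p_{XY}$; Charlie (party 3) has no input and outputs $Z\in\mathcal Z$; a randomized function is a conditional distribution $p_{Z|XY}$. In a protocol the parties, each with private randomness, exchange messages over multiple rounds on three pairwise private links, each message a codeword of a prefix-free code determined by previous messages on that link; the protocol terminates with probability 1 and may depend on $p_{XY}$. $M_{12},M_{23},M_{31}$ are the final transcripts on the Alice–Bob, Bob–Charlie, Charlie–Alice links. A secure protocol $\Pi(p_{XY},p_{Z|XY})$ satisfies correctness (on inputs $x,y$ Charlie's output has distribution $p_{Z|X=x,Y=y}$) and privacy (Markov chains $(M_{12},M_{31})-X-(Y,Z)$, $(M_{12},M_{23})-Y-(X,Z)$, $(M_{23},M_{31})-Z-(X,Y)$). *)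

theory Defs
  imports "HOL-Probability.Probability"
begin

text \<open>
  An outcome of a run records
  Alice's input x, Bob's input y, Charlie's output z and the three final
  link transcripts m12 (Alice-Bob), m23 (Bob-Charlie), m31 (Charlie-Alice).
  Transcripts are concatenations of codewords of binary prefix-free codes,
  hence finite bit strings (bool list).  A protocol, run on inputs drawn
  from the input distribution, induces a joint distribution (a pmf) of these
  six random variables; the security notions only refer to this joint law.
\<close>

type_synonym ('x, 'y, 'z) outcome = "'x \<times> 'y \<times> 'z \<times> bool list \<times> bool list \<times> bool list"

definition inX :: "('x, 'y, 'z) outcome \<Rightarrow> 'x" where "inX w = fst w"
definition inY :: "('x, 'y, 'z) outcome \<Rightarrow> 'y" where "inY w = fst (snd w)"
definition outZ :: "('x, 'y, 'z) outcome \<Rightarrow> 'z" where "outZ w = fst (snd (snd w))"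
definition M12 :: "('x, 'y, 'z) outcome \<Rightarrow> bool list" where "M12 w = fst (snd (snd (snd w)))"
definition M23 :: "('x, 'y, 'z) outcome \<Rightarrow> bool list" where "M23 w = fst (snd (snd (snd (snd w))))"
definition M31 :: "('x, 'y, 'z) outcome \<Rightarrow> bool list" where "M31 w = snd (snd (snd (snd (snd w))))"

definition markov_chain :: "'w pmf \<Rightarrow> ('w \<Rightarrow> 'a) \<Rightarrow> ('w \<Rightarrow> 'b) \<Rightarrow> ('w \<Rightarrow> 'c) \<Rightarrow> bool" where
  "markov_chain P A B C \<longleftrightarrow>
     (\<forall>a b c. measure_pmf.prob P {w. A w = a \<and> B w = b \<and> C w = c} * measure_pmf.prob P {w. B w = b}
            = measure_pmf.prob P {w. A w = a \<and> B w = b} * measure_pmf.prob P {w. B w = b \<and> C w = c})"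

text \<open>Secure protocol for input distribution pXY and randomized function W
  (W x y is the conditional distribution of Z given X = x, Y = y), expressed
  through the joint law P of a run: correct inputs, correctness, privacy.\<close>
definition secure_protocol ::
  "('x \<times> 'y) pmf \<Rightarrow> ('x \<Rightarrow> 'y \<Rightarrow> 'z pmf) \<Rightarrow> ('x, 'y, 'z) outcome pmf \<Rightarrow> bool" where
  "secure_protocol pXY W P \<longleftrightarrow>
     map_pmf (\<lambda>w. (inX w, inY w)) P = pXY \<and>
     (\<forall>x y z. measure_pmf.prob P {w. inX w = x \<and> inY w = y \<and> outZ w = z}
               = pmf pXY (x, y) * pmf (W x y) z) \<and>
     markov_chain P (\<lambda>w. (M12 w, M31 w)) inX (\<lambda>w. (inY w, outZ w)) \<and>
     markov_chain P (\<lambda>w. (M12 w, M23 w)) inY (\<lambda>w. (inX w, outZ w)) \<and>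
     markov_chain P (\<lambda>w. (M23 w, M31 w)) outZ (\<lambda>w. (inX w, inY w))"

end

theory Submission
  imports Defs
begin

lemma prob_sum:
  fixes P :: "'w pmf" and A :: "'w \<Rightarrow> 'a"
  shows "measure_pmf.prob P {w. A w \<in> S \<and> Q w} = infsetsum (\<lambda>a. measure_pmf.prob P {w. A w = a \<and> Q w}) S"
    and "Infinite_Set_Sum.abs_summable_on (\<lambda>a. measure_pmf.prob P {w. A w = a \<and> Q w}) S"
proof -
  define g where "g w = (if Q w then Some (A w) else None)" for w
  have e1: "measure_pmf.prob P {w. A w = a \<and> Q w} = pmf (map_pmf g P) (Some a)" for a
  proof -
    have "{w. A w = a \<and> Q w} = g -` {Some a}" by (auto simp: g_def split: if_splits)
    then show ?thesis by (simp add: pmf_map)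
  qed
  have "{w. A w \<in> S \<and> Q w} = g -` (Some ` S)" by (auto simp: g_def split: if_splits)
  then have "measure_pmf.prob P {w. A w \<in> S \<and> Q w} = measure (map_pmf g P) (Some ` S)" by simp
  also have "\<dots> = infsetsum (pmf (map_pmf g P)) (Some ` S)" by (rule measure_pmf_conv_infsetsum)
  also have "\<dots> = infsetsum (\<lambda>a. pmf (map_pmf g P) (Some a)) S"
    by (rule infsetsum_reindex) simp
  finally show "measure_pmf.prob P {w. A w \<in> S \<and> Q w} = infsetsum (\<lambda>a. measure_pmf.prob P {w. A w = a \<and> Q w}) S"
    by (simp add: e1)
  have "Infinite_Set_Sum.abs_summable_on (\<lambda>a. pmf (map_pmf g P) (Some a)) S"
    by (subst abs_summable_on_reindex_iff) auto
  then show "Infinite_Set_Sum.abs_summable_on (\<lambda>a. measure_pmf.prob P {w. A w = a \<and> Q w}) S"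
    by (simp add: e1)
qed

lemma markov_sym:
  assumes "markov_chain P A B C" shows "markov_chain P C B A"
  unfolding markov_chain_def
proof (intro allI)
  fix c b a
  have 1: "{w. C w = c \<and> B w = b \<and> A w = a} = {w. A w = a \<and> B w = b \<and> C w = c}" by auto
  have 2: "{w. C w = c \<and> B w = b} = {w. B w = b \<and> C w = c}" by auto
  have 3: "{w. B w = b \<and> A w = a} = {w. A w = a \<and> B w = b}" by auto
  show "measure_pmf.prob P {w. C w = c \<and> B w = b \<and> A w = a} * measure_pmf.prob P {w. B w = b} =
        measure_pmf.prob P {w. C w = c \<and> B w = b} * measure_pmf.prob P {w. B w = b \<and> A w = a}"
  proof -
    have h: "measure_pmf.prob P {w. A w = a \<and> B w = b \<and> C w = c} * measure_pmf.prob P {w. B w = b} =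
        measure_pmf.prob P {w. A w = a \<and> B w = b} * measure_pmf.prob P {w. B w = b \<and> C w = c}"
      using assms unfolding markov_chain_def by blast
    show ?thesis unfolding 1 2 3 using h by (simp add: mult.commute)
  qed
qed

lemma markov_margA:
  assumes "markov_chain P A B C" shows "markov_chain P (\<lambda>w. f (A w)) B C"
  unfolding markov_chain_def
proof (intro allI)
  fix a' b c
  let ?pr = "measure_pmf.prob P"
  have s1: "?pr {w. f (A w) = a' \<and> B w = b \<and> C w = c} = infsetsum (\<lambda>a. ?pr {w. A w = a \<and> (B w = b \<and> C w = c)}) (f -` {a'})"
    using prob_sum(1)[of P A "f -` {a'}" "\<lambda>w. B w = b \<and> C w = c"] by simp
  have s2: "?pr {w. f (A w) = a' \<and> B w = b} = infsetsum (\<lambda>a. ?pr {w. A w = a \<and> B w = b}) (f -` {a'})"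
    using prob_sum(1)[of P A "f -` {a'}" "\<lambda>w. B w = b"] by simp
  have "?pr {w. f (A w) = a' \<and> B w = b \<and> C w = c} * ?pr {w. B w = b}
      = infsetsum (\<lambda>a. ?pr {w. A w = a \<and> B w = b \<and> C w = c} * ?pr {w. B w = b}) (f -` {a'})"
    unfolding s1 by (rule infsetsum_cmult_left[symmetric]) (rule prob_sum(2))
  also have "\<dots> = infsetsum (\<lambda>a. ?pr {w. A w = a \<and> B w = b} * ?pr {w. B w = b \<and> C w = c}) (f -` {a'})"
    using assms unfolding markov_chain_def by simp
  also have "\<dots> = ?pr {w. f (A w) = a' \<and> B w = b} * ?pr {w. B w = b \<and> C w = c}"
    unfolding s2 by (rule infsetsum_cmult_left) (rule prob_sum(2))
  finally show "?pr {w. f (A w) = a' \<and> B w = b \<and> C w = c} * ?pr {w. B w = b} =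
      ?pr {w. f (A w) = a' \<and> B w = b} * ?pr {w. B w = b \<and> C w = c}" .
qed

lemma mi_zero:
  fixes P :: "'w pmf" and X :: "'w \<Rightarrow> 'a::countable" and Y :: "'w \<Rightarrow> 'b::countable"
  assumes ind: "\<And>x y. measure_pmf.prob P {w. X w = x \<and> Y w = y} = measure_pmf.prob P {w. X w = x} * measure_pmf.prob P {w. Y w = y}"
  shows "prob_space.mutual_information (measure_pmf P) 2 (count_space UNIV) (count_space UNIV) X Y = 0"
proof -
  have p1: "prob_space (distr (measure_pmf P) (count_space UNIV) X)"
    by (rule measure_pmf.prob_space_distr) simp
  have p2: "prob_space (distr (measure_pmf P) (count_space UNIV) Y)"
    by (rule measure_pmf.prob_space_distr) simp
  interpret X': prob_space "distr (measure_pmf P) (count_space UNIV) X" by (rule p1)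
  interpret Y': prob_space "distr (measure_pmf P) (count_space UNIV) Y" by (rule p2)
  interpret pair_prob_space "distr (measure_pmf P) (count_space UNIV) X" "distr (measure_pmf P) (count_space UNIV) Y"
    by unfold_locales
  have eq: "distr (measure_pmf P) (count_space UNIV) X \<Otimes>\<^sub>M distr (measure_pmf P) (count_space UNIV) Y
     = distr (measure_pmf P) (count_space UNIV \<Otimes>\<^sub>M count_space UNIV) (\<lambda>w. (X w, Y w))"
  proof (rule measure_eqI_countable[where A=UNIV])
    have "sets (distr (measure_pmf P) (count_space UNIV) X \<Otimes>\<^sub>M distr (measure_pmf P) (count_space UNIV) Y)
       = sets (count_space (UNIV::'a set) \<Otimes>\<^sub>M count_space (UNIV::'b set))"
      by (intro sets_pair_measure_cong) auto
    then show "sets (distr (measure_pmf P) (count_space UNIV) X \<Otimes>\<^sub>M distr (measure_pmf P) (count_space UNIV) Y) = Pow UNIV"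
      by (subst (asm) pair_measure_countable) auto
    show "sets (distr (measure_pmf P) (count_space UNIV \<Otimes>\<^sub>M count_space UNIV) (\<lambda>w. (X w, Y w))) = Pow UNIV"
      by (simp add: pair_measure_countable)
  next
    fix ab :: "'a \<times> 'b"
    obtain a b where ab: "ab = (a, b)" by fastforce
    have sing: "{(a, b)} \<in> sets (count_space (UNIV::'a set) \<Otimes>\<^sub>M count_space (UNIV::'b set))"
      by (subst pair_measure_countable) auto
    have "emeasure (distr (measure_pmf P) (count_space UNIV) X \<Otimes>\<^sub>M distr (measure_pmf P) (count_space UNIV) Y) {ab}
       = emeasure (distr (measure_pmf P) (count_space UNIV) X) {a} * emeasure (distr (measure_pmf P) (count_space UNIV) Y) {b}"
      unfolding ab by (subst Y'.emeasure_pair_measure_Times[symmetric]) auto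
    also have "\<dots> = ennreal (measure_pmf.prob P {w. X w = a} * measure_pmf.prob P {w. Y w = b})"
      by (simp add: emeasure_distr measure_pmf.emeasure_eq_measure vimage_def ennreal_mult)
    also have "\<dots> = emeasure (distr (measure_pmf P) (count_space UNIV \<Otimes>\<^sub>M count_space UNIV) (\<lambda>w. (X w, Y w))) {ab}"
      unfolding ab ind[symmetric]
      using sing by (subst emeasure_distr) (auto simp: pair_measure_countable measure_pmf.emeasure_eq_measure vimage_def)
    finally show "emeasure (distr (measure_pmf P) (count_space UNIV) X \<Otimes>\<^sub>M distr (measure_pmf P) (count_space UNIV) Y) {ab}
       = emeasure (distr (measure_pmf P) (count_space UNIV \<Otimes>\<^sub>M count_space UNIV) (\<lambda>w. (X w, Y w))) {ab}" .
  qed simp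
  show ?thesis
    unfolding prob_space.mutual_information_def[OF prob_space_measure_pmf] eq[symmetric]
    by (rule KL_same_eq_0)
qed

lemma indep_from_markov:
  fixes P :: "'w pmf" and M :: "'w \<Rightarrow> 'm" and Y :: "'w \<Rightarrow> 'y::finite" and X :: "'w \<Rightarrow> 'x"
  assumes mc: "markov_chain P M Y X"
    and ind: "\<And>x y. measure_pmf.prob P {w. X w = x \<and> Y w = y} = measure_pmf.prob P {w. X w = x} * measure_pmf.prob P {w. Y w = y}"
  shows "measure_pmf.prob P {w. X w = x \<and> M w = m} = measure_pmf.prob P {w. X w = x} * measure_pmf.prob P {w. M w = m}"
proof -
  let ?pr = "measure_pmf.prob P"
  have trm: "?pr {w. Y w = y \<and> (X w = x \<and> M w = m)} = ?pr {w. Y w = y \<and> M w = m} * ?pr {w. X w = x}" for y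
  proof (cases "?pr {w. Y w = y} = 0")
    case True
    have "?pr {w. Y w = y \<and> (X w = x \<and> M w = m)} \<le> ?pr {w. Y w = y}"
      by (rule measure_pmf.finite_measure_mono) auto
    moreover have "?pr {w. Y w = y \<and> M w = m} \<le> ?pr {w. Y w = y}"
      by (rule measure_pmf.finite_measure_mono) auto
    ultimately show ?thesis using True
        measure_nonneg[of "measure_pmf P" "{w. Y w = y \<and> (X w = x \<and> M w = m)}"]
        measure_nonneg[of "measure_pmf P" "{w. Y w = y \<and> M w = m}"] by simp
  next
    case False
    have "?pr {w. M w = m \<and> Y w = y \<and> X w = x} * ?pr {w. Y w = y}
        = ?pr {w. M w = m \<and> Y w = y} * ?pr {w. Y w = y \<and> X w = x}"
      using mc unfolding markov_chain_def by blast
    moreover have "{w. Y w = y \<and> X w = x} = {w. X w = x \<and> Y w = y}" by auto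
    moreover have "{w. M w = m \<and> Y w = y \<and> X w = x} = {w. Y w = y \<and> (X w = x \<and> M w = m)}" by auto
    moreover have "{w. M w = m \<and> Y w = y} = {w. Y w = y \<and> M w = m}" by auto
    ultimately have "?pr {w. Y w = y \<and> (X w = x \<and> M w = m)} * ?pr {w. Y w = y}
        = (?pr {w. Y w = y \<and> M w = m} * ?pr {w. X w = x}) * ?pr {w. Y w = y}"
      using ind[of x y] by simp
    then show ?thesis using False by simp
  qed
  have "?pr {w. X w = x \<and> M w = m} = ?pr {w. Y w \<in> UNIV \<and> (X w = x \<and> M w = m)}" by simp
  also have "\<dots> = (\<Sum>y\<in>UNIV. ?pr {w. Y w = y \<and> (X w = x \<and> M w = m)})"
    unfolding prob_sum(1) by (rule infsetsum_finite) simp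
  also have "\<dots> = (\<Sum>y\<in>UNIV. ?pr {w. Y w = y \<and> M w = m}) * ?pr {w. X w = x}"
    by (simp add: trm sum_distrib_right)
  also have "(\<Sum>y\<in>UNIV. ?pr {w. Y w = y \<and> M w = m}) = ?pr {w. Y w \<in> UNIV \<and> M w = m}"
    unfolding prob_sum(1) by (rule infsetsum_finite[symmetric]) simp
  also have "\<dots> = ?pr {w. M w = m}" by simp
  finally show ?thesis by (simp add: mult.commute)
qed

theorem lemma5:
  fixes pX :: "'x::finite pmf" and pY :: "'y::finite pmf"
    and W :: "'x \<Rightarrow> 'y \<Rightarrow> 'z::finite pmf"
    and P :: "('x, 'y, 'z) outcome pmf"
  assumes "secure_protocol (pair_pmf pX pY) W P"
  shows "prob_space.mutual_information (measure_pmf P) 2 (count_space UNIV) (count_space UNIV) inX M23 = 0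
         \<and> prob_space.mutual_information (measure_pmf P) 2 (count_space UNIV) (count_space UNIV) inY M31 = 0"
proof -
  let ?pr = "measure_pmf.prob P"
  have mp: "map_pmf (\<lambda>w. (inX w, inY w)) P = pair_pmf pX pY"
    and mc1: "markov_chain P (\<lambda>w. (M12 w, M31 w)) inX (\<lambda>w. (inY w, outZ w))"
    and mc2: "markov_chain P (\<lambda>w. (M12 w, M23 w)) inY (\<lambda>w. (inX w, outZ w))"
    using assms unfolding secure_protocol_def by (blast, blast, blast)
  have pxy: "?pr {w. inX w = x \<and> inY w = y} = pmf pX x * pmf pY y" for x y
  proof -
    have "pmf (map_pmf (\<lambda>w. (inX w, inY w)) P) (x, y) = ?pr {w. inX w = x \<and> inY w = y}"
      by (simp add: pmf_map vimage_def)
    then show ?thesis using mp by (simp add: pmf_pair)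
  qed
  have px: "?pr {w. inX w = x} = pmf pX x" for x
  proof -
    have "map_pmf inX P = map_pmf fst (map_pmf (\<lambda>w. (inX w, inY w)) P)"
      by (simp add: map_pmf_comp)
    then have "map_pmf inX P = pX" using mp by (simp add: map_fst_pair_pmf map_snd_pair_pmf)
    then have "pmf (map_pmf inX P) x = pmf pX x" by simp
    then show ?thesis by (simp add: pmf_map vimage_def)
  qed
  have py: "?pr {w. inY w = y} = pmf pY y" for y
  proof -
    have "map_pmf inY P = map_pmf snd (map_pmf (\<lambda>w. (inX w, inY w)) P)"
      by (simp add: map_pmf_comp)
    then have "map_pmf inY P = pY" using mp by (simp add: map_fst_pair_pmf map_snd_pair_pmf)
    then have "pmf (map_pmf inY P) y = pmf pY y" by simp
    then show ?thesis by (simp add: pmf_map vimage_def)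
  qed
  have indXY: "?pr {w. inX w = x \<and> inY w = y} = ?pr {w. inX w = x} * ?pr {w. inY w = y}" for x y
    using pxy px py by simp
  have indYX: "?pr {w. inY w = y \<and> inX w = x} = ?pr {w. inY w = y} * ?pr {w. inX w = x}" for x y
  proof -
    have e: "{w. inY w = y \<and> inX w = x} = {w. inX w = x \<and> inY w = y}" by auto
    show ?thesis unfolding e using indXY[of x y] by (simp add: mult.commute)
  qed
  have a1: "markov_chain P M23 inY (\<lambda>w. (inX w, outZ w))"
    using markov_margA[OF mc2, of snd] by simp
  have a2: "markov_chain P M23 inY inX"
    using markov_sym[OF markov_margA[OF markov_sym[OF a1], of fst]] by simp
  have b1: "markov_chain P M31 inX (\<lambda>w. (inY w, outZ w))"
    using markov_margA[OF mc1, of snd] by simp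
  have b2: "markov_chain P M31 inX inY"
    using markov_sym[OF markov_margA[OF markov_sym[OF b1], of fst]] by simp
  have i1: "?pr {w. inX w = x \<and> M23 w = m} = ?pr {w. inX w = x} * ?pr {w. M23 w = m}" for x m
    by (rule indep_from_markov[OF a2 indXY])
  have r1: "prob_space.mutual_information (measure_pmf P) 2 (count_space UNIV) (count_space UNIV) inX M23 = 0"
    by (rule mi_zero[OF i1])
  have i2: "?pr {w. inY w = y \<and> M31 w = m} = ?pr {w. inY w = y} * ?pr {w. M31 w = m}" for y m
    by (rule indep_from_markov[OF b2 indYX])
  have r2: "prob_space.mutual_information (measure_pmf P) 2 (count_space UNIV) (count_space UNIV) inY M31 = 0"
    by (rule mi_zero[OF i2])
  show ?thesis using r1 r2 by simp
qed

end
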